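(* Let $n>1$ and $m\geq 1$ be integers with $m\leq n$. Then $\operatorname{ecc}_{Z_{n,m}}(0)=\lfloor\frac{n(m+1)}{2}\rfloor$, i.e. the maximum graph distance in $Z_{n,m}$ from the all-zero vertex $0$ to any vertex equals $\lfloor\frac{n(m+1)}{2}\rfloor$.
   Context: Elements of $\mathbb{Z}_n$ are identified with their representatives in $\{0,\dots,n-1\}$. The dYoke graph $Z_{n,m}$ has as vertices all $u=(u_0,\dots,u_{m+1})\in\mathbb{Z}_n\times\{-1,0,1\}^m\times\mathbb{Z}_n$ with $\sum_{i=0}^{m+1}u_i\equiv0\pmod n$; $u,v$ are adjacent if there is $0\leq i\leq m$ such that $u_j=v_j$ for all $j\notin\{i,i+1\}$ and either ($u_i=v_i+1$, $u_{i+1}=v_{i+1}-1$) or ($u_i=v_i-1$, $u_{i+1}=v_{i+1}+1$), arithmetic in coordinates $0,m+1$ being in $\mathbb{Z}_n$ and in coordinates $1,\dots,m$ in $\mathbb{Z}$. $0$ denotes the vertex $(0,\dots,0)$. *)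

theory Defs
  imports Main "HOL-Library.Extended_Nat"
begin

text \<open>Vertices of the dYoke graph Z_{n,m} are represented as integer lists
  u = [u_0, ..., u_{m+1}] of length m+2, with u_0, u_{m+1} in {0..n-1}
  (representatives of Z_n), u_1..u_m in {-1,0,1}, and sum divisible by n.\<close>

definition dyoke_vertices :: "nat \<Rightarrow> nat \<Rightarrow> int list set" where
  "dyoke_vertices n m = {u. length u = m + 2
      \<and> 0 \<le> u ! 0 \<and> u ! 0 < int n
      \<and> 0 \<le> u ! (m+1) \<and> u ! (m+1) < int n
      \<and> (\<forall>j\<in>{1..m}. u ! j \<in> {-1, 0, 1})
      \<and> sum_list u mod int n = 0}"

definition dyoke_shift :: "nat \<Rightarrow> nat \<Rightarrow> nat \<Rightarrow> int \<Rightarrow> int \<Rightarrow> int" where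
  "dyoke_shift n m j x d = (if j = 0 \<or> j = m + 1 then (x + d) mod int n else x + d)"

definition dyoke_adj :: "nat \<Rightarrow> nat \<Rightarrow> int list \<Rightarrow> int list \<Rightarrow> bool" where
  "dyoke_adj n m u v \<longleftrightarrow> u \<in> dyoke_vertices n m \<and> v \<in> dyoke_vertices n m \<and>
     (\<exists>i\<le>m. (\<forall>j<m+2. j \<noteq> i \<and> j \<noteq> i + 1 \<longrightarrow> u ! j = v ! j) \<and>
        ((u ! i = dyoke_shift n m i (v ! i) 1 \<and> u ! (i+1) = dyoke_shift n m (i+1) (v ! (i+1)) (-1)) \<or>
         (u ! i = dyoke_shift n m i (v ! i) (-1) \<and> u ! (i+1) = dyoke_shift n m (i+1) (v ! (i+1)) 1)))"

inductive dyoke_walk :: "nat \<Rightarrow> nat \<Rightarrow> nat \<Rightarrow> int list \<Rightarrow> int list \<Rightarrow> bool"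
  for n m where
  refl: "u \<in> dyoke_vertices n m \<Longrightarrow> dyoke_walk n m 0 u u"
| step: "dyoke_adj n m u w \<Longrightarrow> dyoke_walk n m k w v \<Longrightarrow> dyoke_walk n m (Suc k) u v"

definition dyoke_dist :: "nat \<Rightarrow> nat \<Rightarrow> int list \<Rightarrow> int list \<Rightarrow> enat" where
  "dyoke_dist n m u v = (INF k \<in> {k. dyoke_walk n m k u v}. enat k)"

definition dyoke_ecc :: "nat \<Rightarrow> nat \<Rightarrow> int list \<Rightarrow> enat" where
  "dyoke_ecc n m u = (SUP v \<in> dyoke_vertices n m. dyoke_dist n m u v)"

end

theory Submission
  imports Defs
begin


lemma sum_list_upd_int: "i < length xs \<Longrightarrow> sum_list (xs[i:=a]) = sum_list xs - xs!i + (a::int)"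
  by (induction xs arbitrary: i) (auto split: nat.split)

lemma shift_mid: "j \<noteq> 0 \<Longrightarrow> j \<noteq> m+1 \<Longrightarrow> dyoke_shift n m j a d = a + d"
  by (simp add: dyoke_shift_def)

lemma shift_ex: "\<exists>q. dyoke_shift n m j a d = a + d + int n * q"
proof (cases "j = 0 \<or> j = m+1")
  case True
  then have "dyoke_shift n m j a d = a + d + int n * (- ((a+d) div int n))"
    by (simp add: dyoke_shift_def minus_div_mult_eq_mod[symmetric] algebra_simps)
  then show ?thesis by blast
next
  case False then show ?thesis by (intro exI[of _ 0]) (simp add: dyoke_shift_def)
qed

lemma walk_snoc: "dyoke_walk n m k u w \<Longrightarrow> dyoke_adj n m w v \<Longrightarrow> dyoke_walk n m (Suc k) u v"
proof (induction rule: dyoke_walk.induct)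
  case (refl u)
  then have "v \<in> dyoke_vertices n m" by (simp add: dyoke_adj_def)
  then show ?case using refl dyoke_walk.step dyoke_walk.refl by blast
next
  case (step u w k v')
  then show ?case using dyoke_walk.step by blast
qed

lemma walk_flow:
  "dyoke_walk n m k u v \<Longrightarrow> \<exists>x. int n dvd (x 0 - (v!0 - u!0)) \<and>
     (\<forall>j\<in>{1..m}. v!j - u!j = x j - x (j-1)) \<and> (\<Sum>j\<le>m. \<bar>x j\<bar>) \<le> int k"
proof (induction rule: dyoke_walk.induct)
  case (refl u)
  show ?case by (intro exI[of _ "\<lambda>_. 0"]) simp
next
  case (step u w k v)
  from step.IH obtain x where x0: "int n dvd (x 0 - (v!0 - w!0))"
    and xj: "\<forall>j\<in>{1..m}. v!j - w!j = x j - x (j-1)" and xs: "(\<Sum>j\<le>m. \<bar>x j\<bar>) \<le> int k" by blast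
  from step.hyps(1) obtain i where im: "i \<le> m"
    and oth: "\<forall>j<m+2. j \<noteq> i \<and> j \<noteq> i + 1 \<longrightarrow> u ! j = w ! j"
    and dis: "(u ! i = dyoke_shift n m i (w ! i) 1 \<and> u ! (i+1) = dyoke_shift n m (i+1) (w ! (i+1)) (-1)) \<or>
         (u ! i = dyoke_shift n m i (w ! i) (-1) \<and> u ! (i+1) = dyoke_shift n m (i+1) (w ! (i+1)) 1)"
    unfolding dyoke_adj_def by blast
  obtain \<delta> :: int where d: "\<delta> = 1 \<or> \<delta> = -1" and ui: "u ! i = dyoke_shift n m i (w ! i) \<delta>"
    and ui1: "u ! (i+1) = dyoke_shift n m (i+1) (w ! (i+1)) (-\<delta>)"
    using dis by force
  define x' where "x' = x(i := x i - \<delta>)"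
  have mid: "u!j = w!j + (if j = i then \<delta> else 0) - (if j = i+1 then \<delta> else 0)" if "j \<in> {1..m}" for j
  proof -
    have "j \<noteq> 0" "j \<noteq> m+1" using that by auto
    then show ?thesis using ui ui1 oth that shift_mid[of j m n] by auto
  qed
  have A: "int n dvd (x' 0 - (v!0 - u!0))"
  proof (cases "i = 0")
    case True
    obtain q where "u!0 = w!0 + \<delta> + int n * q" using ui shift_ex True by metis
    then have "x' 0 - (v!0 - u!0) = (x 0 - (v!0 - w!0)) + int n * q" using True by (simp add: x'_def)
    then show ?thesis using x0 by (metis dvd_add dvd_triv_left)
  next
    case False
    then have "u!0 = w!0" using oth by auto
    then show ?thesis using False x0 by (simp add: x'_def)
  qed
  have B: "\<forall>j\<in>{1..m}. v!j - u!j = x' j - x' (j-1)"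
  proof
    fix j assume j: "j \<in> {1..m}"
    show "v!j - u!j = x' j - x' (j-1)"
      using mid[OF j] xj j by (auto simp: x'_def)
  qed
  have "(\<Sum>j\<le>m. \<bar>x' j\<bar>) = (\<Sum>j\<le>m. \<bar>x j\<bar>) - \<bar>x i\<bar> + \<bar>x i - \<delta>\<bar>"
  proof -
    have "(\<Sum>j\<le>m. \<bar>x' j\<bar>) = \<bar>x' i\<bar> + (\<Sum>j\<in>{..m}-{i}. \<bar>x' j\<bar>)"
      using im by (simp add: sum.remove)
    also have "(\<Sum>j\<in>{..m}-{i}. \<bar>x' j\<bar>) = (\<Sum>j\<in>{..m}-{i}. \<bar>x j\<bar>)"
      by (rule sum.cong) (auto simp: x'_def)
    also have "(\<Sum>j\<in>{..m}-{i}. \<bar>x j\<bar>) = (\<Sum>j\<le>m. \<bar>x j\<bar>) - \<bar>x i\<bar>"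
      using im by (simp add: sum.remove)
    finally show ?thesis by (simp add: x'_def)
  qed
  then have C: "(\<Sum>j\<le>m. \<bar>x' j\<bar>) \<le> int (Suc k)" using xs d by auto
  show ?case using A B C by blast
qed



definition flow :: "nat \<Rightarrow> nat \<Rightarrow> int list \<Rightarrow> (nat \<Rightarrow> int) \<Rightarrow> bool" where
  "flow n m v x \<longleftrightarrow> int n dvd (x 0 - v!0) \<and> (\<forall>j\<in>{1..m}. v!j = x j - x (j-1))"

lemma sum_remove_change:
  fixes i m :: nat
  assumes "i \<le> m"
  shows "(\<Sum>j\<le>m. \<bar>(x(i := a)) j\<bar>) = (\<Sum>j\<le>m. \<bar>x j\<bar>) - \<bar>x i\<bar> + \<bar>a::int\<bar>"
proof -
  have "(\<Sum>j\<le>m. \<bar>(x(i := a)) j\<bar>) = \<bar>(x(i := a)) i\<bar> + (\<Sum>j\<in>{..m}-{i}. \<bar>(x(i := a)) j\<bar>)"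
    by (rule sum.remove) (use assms in auto)
  then have "(\<Sum>j\<le>m. \<bar>(x(i := a)) j\<bar>) = \<bar>a\<bar> + (\<Sum>j\<in>{..m}-{i}. \<bar>(x(i := a)) j\<bar>)"
    by simp
  also have "(\<Sum>j\<in>{..m}-{i}. \<bar>(x(i := a)) j\<bar>) = (\<Sum>j\<in>{..m}-{i}. \<bar>x j\<bar>)"
    by (rule sum.cong) auto
  also have "(\<Sum>j\<in>{..m}-{i}. \<bar>x j\<bar>) = (\<Sum>j\<le>m. \<bar>x j\<bar>) - \<bar>x i\<bar>"
    using assms by (simp add: sum.remove)
  finally show ?thesis by simp
qed

lemma descent_step:
  assumes n: "n > 0" and V: "v \<in> dyoke_vertices n m" and F: "flow n m v x" and im: "i \<le> m"
    and d: "\<delta> = 1 \<or> \<delta> = -1"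
    and c1: "i \<ge> 1 \<Longrightarrow> \<delta> * (x i - x (i-1)) \<ge> 0"
    and c2: "i+1 \<le> m \<Longrightarrow> \<delta> * (x (i+1) - x i) \<le> 0"
  shows "\<exists>w. w \<in> dyoke_vertices n m \<and> flow n m w (x(i := x i - \<delta>)) \<and> dyoke_adj n m w v"
proof -
  define w where "w = v[i := dyoke_shift n m i (v!i) (-\<delta>), Suc i := dyoke_shift n m (Suc i) (v!(Suc i)) \<delta>]"
  have len: "length v = m + 2" using V by (simp add: dyoke_vertices_def)
  have lw: "length w = m + 2" using len by (simp add: w_def)
  have wi: "w!i = dyoke_shift n m i (v!i) (-\<delta>)" using len im by (simp add: w_def)
  have wi1: "w!(Suc i) = dyoke_shift n m (Suc i) (v!(Suc i)) \<delta>" using len im by (simp add: w_def)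
  have wo: "w!j = v!j" if "j \<noteq> i" "j \<noteq> Suc i" for j using that by (simp add: w_def)
  have vmid: "v!j \<in> {-1,0,1}" if "j \<in> {1..m}" for j using V that by (simp add: dyoke_vertices_def)
  have vj: "v!j = x j - x (j-1)" if "j \<in> {1..m}" for j using F that by (simp add: flow_def)
  have wmid: "w!j = v!j - (if j = i then \<delta> else 0) + (if j = Suc i then \<delta> else 0)" if "j \<in> {1..m}" for j
    using that wi wi1 wo shift_mid[of j m n] by auto
  have v0: "0 \<le> v!0" "v!0 < int n" "0 \<le> v!(m+1)" "v!(m+1) < int n" "sum_list v mod int n = 0"
    using V by (auto simp: dyoke_vertices_def)
  have w0: "0 \<le> w!0 \<and> w!0 < int n"
  proof (cases "i = 0")
    case True then show ?thesis using wi n by (simp add: dyoke_shift_def)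
  next
    case False then show ?thesis using wo[of 0] v0 by simp
  qed
  have wl: "0 \<le> w!(m+1) \<and> w!(m+1) < int n"
  proof (cases "i = m")
    case True then show ?thesis using wi1 n by (simp add: dyoke_shift_def)
  next
    case False then show ?thesis using wo[of "m+1"] v0 im by simp
  qed
  have wmid2: "w!j \<in> {-1,0,1}" if j: "j \<in> {1..m}" for j
  proof -
    consider "j = i" | "j = Suc i" | "j \<noteq> i" "j \<noteq> Suc i" by blast
    then show ?thesis
    proof cases
      case 1
      then have "\<delta> * v!j \<ge> 0" using c1 vj[OF j] j by auto
      then show ?thesis using wmid[OF j] 1 vmid[OF j] d by auto
    next
      case 2
      then have "\<delta> * v!j \<le> 0" using c2 vj[OF j] j by auto
      then show ?thesis using wmid[OF j] 2 vmid[OF j] d by auto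
    qed (use wmid[OF j] vmid[OF j] in auto)
  qed
  obtain q1 where q1: "dyoke_shift n m i (v!i) (-\<delta>) = v!i + (-\<delta>) + int n * q1" using shift_ex by blast
  obtain q2 where q2: "dyoke_shift n m (Suc i) (v!(Suc i)) \<delta> = v!(Suc i) + \<delta> + int n * q2" using shift_ex by blast
  have "sum_list w = sum_list v - v!i + dyoke_shift n m i (v!i) (-\<delta>) - v!(Suc i) + dyoke_shift n m (Suc i) (v!(Suc i)) \<delta>"
    using len im unfolding w_def by (simp add: sum_list_upd_int nth_list_update)
  also have "\<dots> = sum_list v + int n * (q1 + q2)" using q1 q2 by (simp add: algebra_simps)
  finally have "sum_list w mod int n = sum_list v mod int n" by simp
  then have W: "w \<in> dyoke_vertices n m"
    using lw w0 wl wmid2 v0 unfolding dyoke_vertices_def by auto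
  have FW: "flow n m w (x(i := x i - \<delta>))"
    unfolding flow_def
  proof
    show "int n dvd ((x(i := x i - \<delta>)) 0 - w!0)"
    proof (cases "i = 0")
      case True
      then have "(x(i := x i - \<delta>)) 0 - w!0 = (x 0 - v!0) + int n * (- q1)" using wi q1 by (simp add: algebra_simps)
      then show ?thesis using F by (metis dvd_add dvd_triv_left flow_def)
    next
      case False then show ?thesis using wo[of 0] F by (simp add: flow_def)
    qed
    show "\<forall>j\<in>{1..m}. w!j = (x(i := x i - \<delta>)) j - (x(i := x i - \<delta>)) (j-1)"
    proof
      fix j assume j: "j \<in> {1..m}"
      show "w!j = (x(i := x i - \<delta>)) j - (x(i := x i - \<delta>)) (j-1)"
        using wmid[OF j] vj[OF j] j by auto
    qed
  qed
  have "dyoke_adj n m w v"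
    unfolding dyoke_adj_def
  proof (intro conjI exI[of _ i])
    show "w \<in> dyoke_vertices n m" by (rule W)
    show "v \<in> dyoke_vertices n m" by (rule V)
    show "i \<le> m" by (rule im)
    show "\<forall>j<m + 2. j \<noteq> i \<and> j \<noteq> i + 1 \<longrightarrow> w ! j = v ! j" using wo by auto
    show "w ! i = dyoke_shift n m i (v ! i) 1 \<and> w ! (i + 1) = dyoke_shift n m (i + 1) (v ! (i + 1)) (- 1) \<or>
    w ! i = dyoke_shift n m i (v ! i) (- 1) \<and> w ! (i + 1) = dyoke_shift n m (i + 1) (v ! (i + 1)) 1"
      using d wi wi1 by auto
  qed
  then show ?thesis using W FW by blast
qed

lemma descent:
  assumes n: "n > 0" and V: "v \<in> dyoke_vertices n m" and F: "flow n m v x"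
    and S: "(\<Sum>j\<le>m. \<bar>x j\<bar>) = int (Suc c)"
  shows "\<exists>w x'. w \<in> dyoke_vertices n m \<and> flow n m w x' \<and> (\<Sum>j\<le>m. \<bar>x' j\<bar>) = int c \<and> dyoke_adj n m w v"
proof -
  have key: "\<exists>w x'. w \<in> dyoke_vertices n m \<and> flow n m w x' \<and> (\<Sum>j\<le>m. \<bar>x' j\<bar>) = int c \<and> dyoke_adj n m w v"
    if i: "i \<le> m" and d: "\<delta> = 1 \<or> \<delta> = -1" and pos: "\<delta> * x i > 0"
      and c1: "i \<ge> 1 \<Longrightarrow> \<delta> * (x i - x (i-1)) \<ge> 0"
      and c2: "i+1 \<le> m \<Longrightarrow> \<delta> * (x (i+1) - x i) \<le> 0" for i \<delta>
  proof -
    obtain w where "w \<in> dyoke_vertices n m" "flow n m w (x(i := x i - \<delta>))" "dyoke_adj n m w v"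
      using descent_step[OF n V F i d c1 c2] by blast
    moreover have "(\<Sum>j\<le>m. \<bar>(x(i := x i - \<delta>)) j\<bar>) = int c"
      using sum_remove_change[OF i, of x "x i - \<delta>"] S d pos by auto
    ultimately show ?thesis by blast
  qed
  show ?thesis
  proof (cases "\<exists>j\<le>m. x j > 0")
    case True
    define M where "M = Max (x ` {..m})"
    have "M \<in> x ` {..m}" unfolding M_def by (intro Max_in) auto
    then obtain i where i: "i \<le> m" "x i = M" by auto
    have ge: "x j \<le> x i" if "j \<le> m" for j
    proof -
      have "x j \<le> M" unfolding M_def by (rule Max_ge) (use that in auto)
      then show ?thesis using i by simp
    qed
    have "x i > 0" using True ge by force
    have c1: "1 * (x i - x (i-1)) \<ge> 0" if "i \<ge> 1" using ge[of "i-1"] i by auto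
    have c2: "1 * (x (i+1) - x i) \<le> 0" if "i+1 \<le> m" using ge[of "i+1"] that by auto
    show ?thesis by (rule key[OF i(1), of 1]) (use \<open>x i > 0\<close> c1 c2 in auto)
  next
    case False
    have "\<exists>j\<le>m. x j \<noteq> 0"
    proof (rule ccontr)
      assume "\<not> ?thesis"
      then have "(\<Sum>j\<le>m. \<bar>x j\<bar>) = 0" by simp
      then show False using S by simp
    qed
    then have neg: "\<exists>j\<le>m. x j < 0" using False by force
    define M where "M = Min (x ` {..m})"
    have "M \<in> x ` {..m}" unfolding M_def by (intro Min_in) auto
    then obtain i where i: "i \<le> m" "x i = M" by auto
    have le: "x i \<le> x j" if "j \<le> m" for j
    proof -
      have "M \<le> x j" unfolding M_def by (rule Min_le) (use that in auto)
      then show ?thesis using i by simp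
    qed
    have "x i < 0" using neg le by force
    have c1: "-1 * (x i - x (i-1)) \<ge> 0" if "i \<ge> 1" using le[of "i-1"] i by auto
    have c2: "-1 * (x (i+1) - x i) \<le> 0" if "i+1 \<le> m" using le[of "i+1"] that by auto
    show ?thesis by (rule key[OF i(1), of "-1"]) (use \<open>x i < 0\<close> c1 c2 in auto)
  qed
qed

lemma flow_zero:
  assumes V: "v \<in> dyoke_vertices n m" and F: "flow n m v x" and S: "(\<Sum>j\<le>m. \<bar>x j\<bar>) = 0"
  shows "v = replicate (m+2) 0"
proof -
  have x0: "x j = 0" if "j \<le> m" for j using S that by (simp add: sum_nonneg_eq_0_iff)
  have len: "length v = m + 2" using V by (simp add: dyoke_vertices_def)
  have mid: "v!j = 0" if "j \<in> {1..m}" for j using F that x0 by (auto simp: flow_def)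
  have "int n dvd v!0" using F x0[of 0] by (simp add: flow_def)
  moreover have "0 \<le> v!0" "v!0 < int n" using V by (auto simp: dyoke_vertices_def)
  ultimately have z0: "v!0 = 0" by (cases "v!0 = 0") (auto dest: zdvd_imp_le)
  have "sum_list v = (\<Sum>j<m+2. v!j)" using len by (simp add: sum_list_sum_nth atLeast0LessThan)
  also have "\<dots> = (\<Sum>j<m+1. v!j) + v!(m+1)" by simp
  also have "(\<Sum>j<m+1. v!j) = 0"
  proof (rule sum.neutral, intro ballI)
    fix j assume "j \<in> {..<m+1}"
    then show "v!j = 0" using z0 mid by (cases "j = 0") auto
  qed
  finally have "sum_list v = v!(m+1)" by simp
  moreover have "sum_list v mod int n = 0" "0 \<le> v!(m+1)" "v!(m+1) < int n" using V by (auto simp: dyoke_vertices_def)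
  ultimately have zl: "v!(m+1) = 0" by simp
  show ?thesis
  proof (rule nth_equalityI)
    show "length v = length (replicate (m+2) (0::int))" using len by simp
    fix j assume "j < length v"
    then have "j = 0 \<or> j \<in> {1..m} \<or> j = m+1" using len by auto
    moreover have "replicate (m+2) (0::int) ! j = 0" using \<open>j < length v\<close> len by (intro nth_replicate) simp
    ultimately show "v!j = replicate (m+2) 0 ! j" using z0 zl mid by auto
  qed
qed

lemma walk_from_flow:
  assumes n: "n > 0"
  shows "v \<in> dyoke_vertices n m \<Longrightarrow> flow n m v x \<Longrightarrow> (\<Sum>j\<le>m. \<bar>x j\<bar>) = int c
    \<Longrightarrow> dyoke_walk n m c (replicate (m+2) 0) v"
proof (induction c arbitrary: v x)
  case 0
  then have "v = replicate (m+2) 0" using flow_zero by simp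
  then show ?case using 0 dyoke_walk.refl by simp
next
  case (Suc c)
  obtain w x' where "w \<in> dyoke_vertices n m" "flow n m w x'" "(\<Sum>j\<le>m. \<bar>x' j\<bar>) = int c" "dyoke_adj n m w v"
    using descent[OF n Suc.prems] by blast
  then show ?case using Suc.IH walk_snoc by blast
qed



lemma sum_abs_dist:
  fixes i m :: nat
  assumes "i \<le> m"
  shows "2 * (\<Sum>j\<le>m. \<bar>int j - int i\<bar>) \<le> int (m*(m+1))"
proof -
  let ?g = "\<lambda>j::nat. \<bar>int j - int i\<bar>"
  have r: "(\<Sum>j\<in>{0..m}. ?g j) = (\<Sum>j\<in>{0..m}. ?g (m - j))"
    using sum.atLeastAtMost_rev[of ?g 0 m] by simp
  have "2 * (\<Sum>j\<le>m. ?g j) = (\<Sum>j\<in>{0..m}. ?g j + ?g (m - j))"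
    using r by (simp add: atMost_atLeast0 sum.distrib)
  also have "\<dots> \<le> (\<Sum>j\<in>{0..m}. int m)"
    by (rule sum_mono) (use assms in auto)
  also have "\<dots> = int (m*(m+1))" by (simp add: algebra_simps)
  finally show ?thesis .
qed

lemma half_bound:
  fixes A :: int
  assumes "2 * A \<le> int B"
  shows "A \<le> int (B div 2)"
  using assms by linarith

lemma upper_exists:
  assumes n: "n > 0" and mn: "m \<le> n" and V: "v \<in> dyoke_vertices n m"
  shows "\<exists>x. flow n m v x \<and> (\<Sum>j\<le>m. \<bar>x j\<bar>) \<le> int (n*(m+1) div 2)"
proof -
  define S where "S j = (\<Sum>k\<in>{1..j}. v!k)" for j
  have S0: "S 0 = 0" by (simp add: S_def)
  have SS: "S (Suc j) = S j + v!(Suc j)" for j by (simp add: S_def)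
  have vmid: "\<bar>v!j\<bar> \<le> 1" if "j \<in> {1..m}" for j
  proof -
    have "v!j \<in> {-1,0,1}" using V that by (simp add: dyoke_vertices_def)
    then show ?thesis by auto
  qed
  have v0: "0 \<le> v!0" "v!0 < int n" using V by (auto simp: dyoke_vertices_def)
  have flowt: "flow n m v (\<lambda>j. t + S j)" if "int n dvd (t - v!0)" for t
    unfolding flow_def
  proof (intro conjI ballI)
    show "int n dvd (t + S 0 - v!0)" using that S0 by simp
    fix j assume j: "j \<in> {1..m}"
    then obtain k where "j = Suc k" by (cases j) auto
    then show "v!j = t + S j - (t + S (j-1))" using SS by simp
  qed
  have lip: "\<bar>S j - S i\<bar> \<le> int (j - i)" if "i \<le> j" "j \<le> m" for i j
    using that
  proof (induction j)
    case 0 then show ?case by simp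
  next
    case (Suc j)
    show ?case
    proof (cases "i = Suc j")
      case True then show ?thesis by simp
    next
      case False
      then have "i \<le> j" using Suc by simp
      then have "\<bar>S j - S i\<bar> \<le> int (j - i)" using Suc by simp
      moreover have "\<bar>v!(Suc j)\<bar> \<le> 1" using vmid Suc by simp
      ultimately show ?thesis using SS[of j] \<open>i \<le> j\<close> by auto
    qed
  qed
  have lip2: "\<bar>S j - S i\<bar> \<le> \<bar>int j - int i\<bar>" if "i \<le> m" "j \<le> m" for i j
  proof (cases "i \<le> j")
    case True then show ?thesis using lip[of i j] that by auto
  next
    case False then show ?thesis using lip[of j i] that by (auto simp: abs_minus_commute)
  qed
  show ?thesis
  proof (cases "\<exists>i\<le>m. int n dvd (v!0 + S i)")
    case True
    then obtain i where i: "i \<le> m" "int n dvd (v!0 + S i)" by blast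
    have "int n dvd (- S i - v!0)" using i(2) by (metis add.commute dvd_minus_iff minus_diff_eq diff_minus_eq_add)
    then have F: "flow n m v (\<lambda>j. - S i + S j)" by (rule flowt)
    have "(\<Sum>j\<le>m. \<bar>- S i + S j\<bar>) \<le> (\<Sum>j\<le>m. \<bar>int j - int i\<bar>)"
      by (rule sum_mono) (use lip2 i in auto)
    then have "2 * (\<Sum>j\<le>m. \<bar>- S i + S j\<bar>) \<le> int (m*(m+1))" using sum_abs_dist[OF i(1)] by linarith
    also have "\<dots> \<le> int (n*(m+1))" using mn by (simp only: of_nat_le_iff mult_le_mono1)
    finally show ?thesis using F half_bound by blast
  next
    case False
    define y where "y j = v!0 + S j" for j
    have yb: "0 < y j \<and> y j < int n" if "j \<le> m" for j
      using that
    proof (induction j)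
      case 0
      have "v!0 \<noteq> 0" using False S0 by auto
      then show ?case using v0 S0 by (simp add: y_def)
    next
      case (Suc j)
      then have "0 < y j \<and> y j < int n" by simp
      moreover have "\<bar>v!(Suc j)\<bar> \<le> 1" using vmid Suc by simp
      moreover have "y (Suc j) = y j + v!(Suc j)" by (simp add: y_def SS)
      moreover have "y (Suc j) \<noteq> 0" "y (Suc j) \<noteq> int n" using False Suc.prems by (auto simp: y_def)
      ultimately show ?case by auto
    qed
    define A where "A = (\<Sum>j\<le>m. y j)"
    show ?thesis
    proof (cases "2 * A \<le> int (n*(m+1))")
      case True
      have F: "flow n m v (\<lambda>j. v!0 + S j)" by (rule flowt) simp
      have "(\<Sum>j\<le>m. \<bar>v!0 + S j\<bar>) = A" unfolding A_def
      proof (rule sum.cong)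
        fix j assume "j \<in> {..m}"
        then have "0 < y j" using yb by simp
        then show "\<bar>v!0 + S j\<bar> = y j" by (simp add: y_def)
      qed simp
      then show ?thesis using F True half_bound by metis
    next
      case False
      have F: "flow n m v (\<lambda>j. (v!0 - int n) + S j)" by (rule flowt) simp
      have "(\<Sum>j\<le>m. \<bar>(v!0 - int n) + S j\<bar>) = (\<Sum>j\<le>m. int n - y j)"
      proof (rule sum.cong)
        fix j assume "j \<in> {..m}"
        then have "y j < int n" using yb by simp
        then show "\<bar>(v!0 - int n) + S j\<bar> = int n - y j" by (simp add: y_def)
      qed simp
      also have "\<dots> = int n * int (m+1) - A" by (simp add: A_def sum_subtractf)
      finally have "2 * (\<Sum>j\<le>m. \<bar>(v!0 - int n) + S j\<bar>) \<le> int (n*(m+1))" using False by (simp add: algebra_simps)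
      then show ?thesis using F half_bound by metis
    qed
  qed
qed



definition wmid :: "nat \<Rightarrow> nat \<Rightarrow> int" where
  "wmid n j = (if odd n then (if odd j then 1 else -1) else 0)"
definition wfst :: "nat \<Rightarrow> nat \<Rightarrow> int" where
  "wfst n j = (if j = 0 then int (n div 2) else wmid n j)"
definition wit :: "nat \<Rightarrow> nat \<Rightarrow> int list" where
  "wit n m = map (\<lambda>j. if j = m+1 then (- (\<Sum>k<m+1. wfst n k)) mod int n else wfst n j) [0..<m+2]"

lemma wit_nth: "j < m+2 \<Longrightarrow> wit n m ! j = (if j = m+1 then (- (\<Sum>k<m+1. wfst n k)) mod int n else wfst n j)"
  unfolding wit_def by (simp del: upt_Suc)

lemma wit_vertex:
  assumes n: "n > 1"
  shows "wit n m \<in> dyoke_vertices n m"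
proof -
  have len: "length (wit n m) = m + 2" by (simp add: wit_def)
  have "sum_list (wit n m) = (\<Sum>j\<in>{0..<m+2}. if j = m+1 then (- (\<Sum>k<m+1. wfst n k)) mod int n else wfst n j)"
    unfolding wit_def by (simp only: sum_set_upt_conv_sum_list_nat[symmetric] set_upt)
  also have "\<dots> = (\<Sum>j<m+1. wfst n j) + (- (\<Sum>k<m+1. wfst n k)) mod int n"
    by (simp add: atLeast0LessThan)
  finally have "sum_list (wit n m) mod int n = 0"
    by (metis mod_add_right_eq add.right_inverse mod_0)
  moreover have "0 \<le> wit n m ! 0 \<and> wit n m ! 0 < int n" using n by (simp add: wit_nth wfst_def)
  moreover have "0 \<le> wit n m ! (m+1) \<and> wit n m ! (m+1) < int n" using n by (simp add: wit_nth)
  moreover have "\<forall>j\<in>{1..m}. wit n m ! j \<in> {-1,0,1}" by (auto simp: wit_nth wfst_def wmid_def)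
  ultimately show ?thesis using len unfolding dyoke_vertices_def by auto
qed

lemma sum_mod2_nat: fixes m :: nat shows "(\<Sum>j\<le>m. j mod 2) = (m+1) div 2"
  by (induction m) (simp_all, presburger)

lemma sum_mod2: "(\<Sum>j\<le>m. int (j mod 2)) = int ((m+1) div 2)"
  using sum_mod2_nat[of m] by (metis of_nat_sum)

lemma par1: "even (j::nat) \<Longrightarrow> j mod 2 = 0 \<and> Suc j mod 2 = 1" by presburger
lemma par2: "odd (j::nat) \<Longrightarrow> j mod 2 = 1 \<and> Suc j mod 2 = 0" by presburger
lemma par3: "odd (n::nat) \<Longrightarrow> n = 2*(n div 2) + 1" by presburger
lemma par4: "even (n::nat) \<Longrightarrow> n = 2*(n div 2)" by presburger

lemma wit_lower:
  assumes n: "n > 1" and F: "flow n m (wit n m) x"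
  shows "int (n*(m+1) div 2) \<le> (\<Sum>j\<le>m. \<bar>x j\<bar>)"
proof -
  define h where "h = n div 2"
  define e where "e j = (if odd n then int (j mod 2) else 0)" for j
  have Fm: "\<forall>j\<in>{1..m}. wit n m ! j = x j - x (j-1)" using F unfolding flow_def by blast
  have xj: "x j = x 0 + e j" if "j \<le> m" for j
    using that
  proof (induction j)
    case 0 then show ?case by (simp add: e_def)
  next
    case (Suc j)
    have "Suc j \<in> {1..m}" using Suc.prems by simp
    from Fm[rule_format, OF this] have "wit n m ! (Suc j) = x (Suc j) - x j" by simp
    moreover have "wit n m ! (Suc j) = wmid n (Suc j)" using Suc.prems by (simp add: wit_nth wfst_def)
    moreover note par1[of j] par2[of j]
    ultimately show ?case using Suc by (cases "even j") (auto simp: e_def wmid_def)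
  qed
  have d0: "int n dvd (x 0 - wit n m ! 0)" using F unfolding flow_def by blast
  have "wit n m ! 0 = wfst n 0" using wit_nth[of 0 m n] by simp
  then have w0: "wit n m ! 0 = int h" by (simp add: wfst_def h_def)
  have "int n dvd (x 0 - int h)" using d0 unfolding w0 .
  then obtain q where q: "x 0 - int h = int n * q" unfolding dvd_def by blast
  have sumeq: "(\<Sum>j\<le>m. \<bar>x j\<bar>) = (\<Sum>j\<le>m. \<bar>x 0 + e j\<bar>)"
  proof (rule sum.cong)
    fix j assume "j \<in> {..m}"
    then have "x j = x 0 + e j" by (intro xj) simp
    then show "\<bar>x j\<bar> = \<bar>x 0 + e j\<bar>" by (simp only:)
  qed simp
  consider "q \<ge> 0" | "q \<le> -1" by linarith
  then have hb: "x 0 \<ge> int h \<or> x 0 \<le> int h - int n"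
  proof cases
    case 1
    then have "int n * q \<ge> 0" by simp
    then show ?thesis using q by linarith
  next
    case 2
    then have "int n * q \<le> int n * (-1)" by (intro mult_left_mono) auto
    then show ?thesis using q by simp
  qed
  show ?thesis
  proof (cases "odd n")
    case True
    then have nh: "n = 2*h + 1" unfolding h_def by (rule par3)
    have N: "n*(m+1) div 2 = h*(m+1) + (m+1) div 2"
    proof -
      have "n*(m+1) = (m+1) + 2*(h*(m+1))" using nh by (simp add: algebra_simps)
      then show ?thesis by (metis add.commute div_mult_self2 zero_neq_numeral)
    qed
    have es: "(\<Sum>j\<le>m. e j) = int ((m+1) div 2)" using True sum_mod2 by (simp add: e_def)
    have e01: "0 \<le> e j \<and> e j \<le> 1" for j by (auto simp: e_def)
    show ?thesis
    proof (cases "x 0 \<ge> int h")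
      case True
      have "(\<Sum>j\<le>m. \<bar>x 0 + e j\<bar>) \<ge> (\<Sum>j\<le>m. int h + e j)"
        by (rule sum_mono) (use True e01 in auto)
      also have "(\<Sum>j\<le>m. int h + e j) = int h * int (m+1) + int ((m+1) div 2)"
        by (simp add: sum.distrib es)
      finally have "int h * int (m+1) + int ((m+1) div 2) \<le> (\<Sum>j\<le>m. \<bar>x 0 + e j\<bar>)" .
      moreover have "int (n*(m+1) div 2) = int h * int (m+1) + int ((m+1) div 2)" by (simp only: N of_nat_add of_nat_mult)
      ultimately show ?thesis using sumeq by linarith
    next
      case False
      then have "x 0 \<le> - int h - 1" using hb nh by simp
      then have "(\<Sum>j\<le>m. \<bar>x 0 + e j\<bar>) \<ge> (\<Sum>j\<le>m. int h + 1 - e j)"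
        by (intro sum_mono) (use e01 in auto)
      also have "(\<Sum>j\<le>m. int h + 1 - e j) = (int h + 1) * int (m+1) - int ((m+1) div 2)"
        by (simp add: sum_subtractf es)
      finally have "(\<Sum>j\<le>m. \<bar>x 0 + e j\<bar>) \<ge> (int h + 1) * int (m+1) - int ((m+1) div 2)" .
      moreover have "int (n*(m+1) div 2) \<le> (int h + 1) * int (m+1) - int ((m+1) div 2)"
      proof -
        have a: "int (n*(m+1) div 2) = int h * int (m+1) + int ((m+1) div 2)" by (simp only: N of_nat_add of_nat_mult)
        have b: "2 * int ((m+1) div 2) \<le> int (m+1)" by linarith
        have c: "(int h + 1) * int (m+1) = int h * int (m+1) + int (m+1)" by (simp add: algebra_simps)
        show ?thesis using a b c by linarith
      qed
      ultimately show ?thesis using sumeq by linarith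
    qed
  next
    case False
    then have nh: "n = 2*h" unfolding h_def by (intro par4) simp
    have N: "n*(m+1) div 2 = h*(m+1)" using nh by simp
    have "\<bar>x 0\<bar> \<ge> int h" using hb nh by auto
    then have "(\<Sum>j\<le>m. \<bar>x 0 + e j\<bar>) \<ge> (\<Sum>j\<le>m. int h)"
      by (intro sum_mono) (use False in \<open>auto simp: e_def\<close>)
    then show ?thesis using sumeq N by (simp add: algebra_simps)
  qed
qed



theorem theorem5p17:
  fixes n m :: nat
  assumes "n > 1" and "m \<ge> 1" and "m \<le> n"
  shows "dyoke_ecc n m (replicate (m + 2) 0) = enat ((n * (m + 1)) div 2)"
proof -
  define Z :: "int list" where "Z = replicate (m + 2) 0"
  define N where "N = (n * (m + 1)) div 2"
  have n0: "n > 0" using assms by simp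
  have Zj: "Z ! j = 0" if "j < m + 2" for j using that by (simp add: Z_def del: replicate.simps)
  have up: "dyoke_dist n m Z v \<le> enat N" if V: "v \<in> dyoke_vertices n m" for v
  proof -
    obtain x where F: "flow n m v x" and S: "(\<Sum>j\<le>m. \<bar>x j\<bar>) \<le> int N"
      using upper_exists[OF n0 assms(3) V] unfolding N_def by blast
    define c where "c = nat (\<Sum>j\<le>m. \<bar>x j\<bar>)"
    have Sc: "(\<Sum>j\<le>m. \<bar>x j\<bar>) = int c" unfolding c_def by (simp add: sum_nonneg)
    have "dyoke_walk n m c Z v" unfolding Z_def by (rule walk_from_flow[OF n0 V F Sc])
    then have "dyoke_dist n m Z v \<le> enat c" unfolding dyoke_dist_def by (intro INF_lower) simp
    also have "enat c \<le> enat N" using S Sc by simp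
    finally show ?thesis .
  qed
  have low: "enat N \<le> dyoke_dist n m Z (wit n m)"
    unfolding dyoke_dist_def
  proof (rule INF_greatest)
    fix k assume "k \<in> {k. dyoke_walk n m k Z (wit n m)}"
    then have W: "dyoke_walk n m k Z (wit n m)" by simp
    obtain x where x0: "int n dvd (x 0 - (wit n m ! 0 - Z ! 0))"
      and xj: "\<forall>j\<in>{1..m}. wit n m ! j - Z ! j = x j - x (j-1)" and xs: "(\<Sum>j\<le>m. \<bar>x j\<bar>) \<le> int k"
      using walk_flow[OF W] by blast
    have F: "flow n m (wit n m) x" unfolding flow_def
    proof
      show "int n dvd (x 0 - wit n m ! 0)" using x0 Zj[of 0] by simp
      show "\<forall>j\<in>{1..m}. wit n m ! j = x j - x (j - 1)"
      proof
        fix j assume j: "j \<in> {1..m}"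
        then have "Z ! j = 0" using Zj by simp
        moreover have "wit n m ! j - Z ! j = x j - x (j-1)" using xj j by blast
        ultimately show "wit n m ! j = x j - x (j - 1)" by simp
      qed
    qed
    have "int N \<le> int k" using wit_lower[OF assms(1) F] xs unfolding N_def by linarith
    then show "enat N \<le> enat k" by simp
  qed
  have "dyoke_ecc n m Z = enat N"
  proof (rule antisym)
    show "dyoke_ecc n m Z \<le> enat N" unfolding dyoke_ecc_def by (rule SUP_least) (rule up)
    have "dyoke_dist n m Z (wit n m) \<le> dyoke_ecc n m Z"
      unfolding dyoke_ecc_def by (rule SUP_upper) (rule wit_vertex[OF assms(1)])
    then show "enat N \<le> dyoke_ecc n m Z" using low by simp
  qed
  then show ?thesis unfolding Z_def N_def .
qed


end
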